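(* Let $d_n=2^n\Delta_n+\tfrac12$ for $n\ge0$ and $d_n=0$ for $n<0$. Then for every $n\ge1$, $$d_n-\Big(2-\frac1n\Big)d_{n-1}+\Big(1-\frac1n\Big)d_{n-2}-\Big(4-\frac6n\Big)d_{n-3}+\Big(4-\frac8n\Big)d_{n-4}=0.$$ Consequently, for every $n\ge4$, $$\Delta_n=\frac{1}{n2^n}+\Big(\frac1{2n}-\frac14\Big)\Delta_{n-4}+\Big(\frac12-\frac{3}{4n}\Big)\Delta_{n-3}+\Big(\frac1{4n}-\frac14\Big)\Delta_{n-2}+\Big(1-\frac1{2n}\Big)\Delta_{n-1}.$$
   Context: A fair coin is flipped $n$ times, producing a sequence $x_1,\dots,x_n\in\{H,T\}$ of independent uniformly random outcomes. Alice's score is the number of indices $i\in\{1,\dots,n-1\}$ with $(x_i,x_{i+1})=(H,H)$; Bob's score is the number of indices $i\in\{1,\dots,n-1\}$ with $(x_i,x_{i+1})=(H,T)$. $\Delta_n$ is the probability that Bob's score strictly exceeds Alice's minus the probability that Alice's score strictly exceeds Bob's (so $\Delta_0=0$). *)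

theory Defs
  imports Complex_Main
begin

text \<open>Coin sequences of length n: lists of booleans, True = H, False = T.
  Indices are 0-based: positions i with i + 1 < length xs.\<close>

definition alice_score :: "bool list \<Rightarrow> nat" where
  "alice_score xs = card {i. i + 1 < length xs \<and> xs ! i \<and> xs ! (i + 1)}"

definition bob_score :: "bool list \<Rightarrow> nat" where
  "bob_score xs = card {i. i + 1 < length xs \<and> xs ! i \<and> \<not> xs ! (i + 1)}"

text \<open>Uniform fair-coin probability: count over the 2^n equally likely sequences.\<close>
definition Delta :: "nat \<Rightarrow> real" where
  "Delta n =
     (real (card {xs. length xs = n \<and> bob_score xs > alice_score xs})
      - real (card {xs. length xs = n \<and> alice_score xs > bob_score xs})) / 2 ^ n"

definition d :: "int \<Rightarrow> real" where
  "d n = (if n < 0 then 0 else 2 ^ nat n * Delta (nat n) + 1 / 2)"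

end

theory Submission
  imports Defs
begin

fun Ln :: "nat \<Rightarrow> int \<Rightarrow> real" where
  "Ln 0 j = (if j = 0 then 1 else 0)"
| "Ln (Suc 0) j = Ln 0 j + Ln 0 (j + 1)"
| "Ln (Suc (Suc m)) j = Ln (Suc m) j + Ln (Suc m) (j + 1) + Ln m (j - 1) - Ln m (j + 1)"
definition L :: "int \<Rightarrow> int \<Rightarrow> real" where
  "L m j = (if m < 0 then 0 else Ln (nat m) j)"
definition KOp :: "(int \<Rightarrow> int \<Rightarrow> real) \<Rightarrow> int \<Rightarrow> int \<Rightarrow> real" where
  "KOp F n j = F n j - F (n - 1) j - F (n - 1) (j + 1) - F (n - 2) (j - 1) + F (n - 2) (j + 1)"
lemma L_neg: "m < 0 \<Longrightarrow> L m j = 0" by (simp add: L_def)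

lemma KOp_L: "KOp L m i = (if m = 0 \<and> i = 0 then 1 else 0)"
proof (cases "m < 0")
  case True then show ?thesis by (simp add: KOp_def L_def)
next
  case False
  then obtain k where k: "m = int k" by (metis nonneg_int_cases not_less)
  show ?thesis
  proof (cases k)
    case 0 then show ?thesis using k by (simp add: KOp_def L_def)
  next
    case (Suc k1)
    show ?thesis
    proof (cases k1)
      case 0 then show ?thesis using k Suc by (simp add: KOp_def L_def)
    next
      case (Suc k2)
      have m2: "m = int (Suc (Suc k2))" using k Suc \<open>k = Suc k1\<close> by simp
      have "m - 1 = int (Suc k2)" "m - 2 = int k2" using m2 by auto
      then show ?thesis using m2 unfolding KOp_def L_def by (simp only: nat_int) simp
    qed
  qed
qed

lemma KOp_zero:
  assumes neg: "\<And>n j. n < 0 \<Longrightarrow> F n j = 0"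
    and K: "\<And>n j. KOp F n j = 0"
  shows "F n j = 0"
proof -
  have "\<forall>j. F (int k - 1) j = 0" for k
  proof (induction k rule: less_induct)
    case (less k)
    show ?case
    proof
      fix j
      show "F (int k - 1) j = 0"
      proof (cases "k = 0")
        case True then show ?thesis using neg by simp
      next
        case False
        have h1: "F (int k - 1 - 1) j' = 0" for j'
        proof (cases "k = 1")
          case True then show ?thesis using neg by simp
        next
          case False
          with \<open>k \<noteq> 0\<close> have "k - 1 < k" "int (k - 1) - 1 = int k - 1 - 1" by auto
          then show ?thesis using less by metis
        qed
        have h2: "F (int k - 1 - 2) j' = 0" for j'
        proof (cases "k \<le> 2")
          case True then show ?thesis using neg by simp
        next
          case False
          then have "k - 2 < k" "int (k - 2) - 1 = int k - 1 - 2" by auto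
          then show ?thesis using less by metis
        qed
        have "KOp F (int k - 1) j = 0" by (rule K)
        then show ?thesis using h1 h2 by (simp add: KOp_def)
      qed
    qed
  qed
  from this[of "nat (n + 1)"] show ?thesis
    by (cases "n < -1") (auto simp: neg)
qed

definition Phi1 :: "int \<Rightarrow> int \<Rightarrow> real" where
  "Phi1 n j = (1 * real_of_int n) * L n j + (1 + (-2) * real_of_int j + (-2) * real_of_int n) * L (n - 1) j + (1 * real_of_int j) * L (n - 1) (j + 1) + ((-2) * real_of_int j) * L (n - 2) (j - 1) + ((-1) + 2 * real_of_int j + 1 * real_of_int n) * L (n - 2) j + (3 * real_of_int j) * L (n - 3) (j - 1) + (6 + 2 * real_of_int j + (-4) * real_of_int n) * L (n - 3) j + ((-1) * real_of_int j) * L (n - 3) (j + 1) + ((-8) + 4 * real_of_int n) * L (n - 4) j"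

definition Phi2a :: "int \<Rightarrow> int \<Rightarrow> real" where
  "Phi2a n j = (1 * real_of_int n) * L n j + (1 * real_of_int j + (-3) * real_of_int n) * L (n - 1) j + (1 * real_of_int j + (-1) * real_of_int n * real_of_int j) * L (n - 1) (j + 1) + (2 * real_of_int j + (-2) * real_of_int n) * L (n - 2) (j - 1) + (2 * real_of_int n) * L (n - 2) j + ((-2) * real_of_int j + 2 * real_of_int n + 2 * real_of_int n * real_of_int j) * L (n - 2) (j + 1) + (1 * real_of_int n * real_of_int j) * L (n - 2) (j + 2) + (2 * real_of_int n) * L (n - 3) (j - 1) + (1 * real_of_int n * real_of_int j) * L (n - 3) j + ((-2) * real_of_int n + (-1) * real_of_int n * real_of_int j) * L (n - 3) (j + 1) + ((-2) * real_of_int n * real_of_int j) * L (n - 3) (j + 2) + ((-1) * real_of_int n * real_of_int j) * L (n - 4) j + (1 * real_of_int n * real_of_int j) * L (n - 4) (j + 2)"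

definition Phi2 :: "int \<Rightarrow> int \<Rightarrow> real" where
  "Phi2 n j = Phi2a n j - (KOp L (n - 1) (j + 1) - 2 * KOp L (n - 1) j - 2 * KOp L (n - 2) (j + 1))"

lemma KOp_Phi1: "KOp Phi1 n j = (1 * real_of_int n) * KOp L n j + (2 + (-2) * real_of_int j + (-2) * real_of_int n) * KOp L (n - 1) j + (1 + 1 * real_of_int j) * KOp L (n - 1) (j + 1) + (2 + (-2) * real_of_int j) * KOp L (n - 2) (j - 1) + ((-2) + 2 * real_of_int j + 1 * real_of_int n) * KOp L (n - 2) j + ((-3) + 3 * real_of_int j) * KOp L (n - 3) (j - 1) + (12 + 2 * real_of_int j + (-4) * real_of_int n) * KOp L (n - 3) j + ((-1) + (-1) * real_of_int j) * KOp L (n - 3) (j + 1) + ((-16) + 4 * real_of_int n) * KOp L (n - 4) j"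
  unfolding KOp_def Phi1_def by (simp add: algebra_simps)

lemma KOp_Phi2: "KOp Phi2 n j = (1 * real_of_int n) * KOp L n j + (3 + 1 * real_of_int j + (-3) * real_of_int n) * KOp L (n - 1) j + (1 * real_of_int j + (-1) * real_of_int n * real_of_int j) * KOp L (n - 1) (j + 1) + (2 + 2 * real_of_int j + (-2) * real_of_int n) * KOp L (n - 2) (j - 1) + ((-4) + 2 * real_of_int n) * KOp L (n - 2) j + ((-3) + (-3) * real_of_int j + 2 * real_of_int n + 2 * real_of_int n * real_of_int j) * KOp L (n - 2) (j + 1) + ((-1) * real_of_int j + 1 * real_of_int n + 1 * real_of_int n * real_of_int j) * KOp L (n - 2) (j + 2) + ((-6) + 2 * real_of_int n) * KOp L (n - 3) (j - 1) + (3 + (-2) * real_of_int j + (-1) * real_of_int n + 1 * real_of_int n * real_of_int j) * KOp L (n - 3) j + (4 + 1 * real_of_int j + (-2) * real_of_int n + (-1) * real_of_int n * real_of_int j) * KOp L (n - 3) (j + 1) + (3 * real_of_int j + (-2) * real_of_int n + (-2) * real_of_int n * real_of_int j) * KOp L (n - 3) (j + 2) + ((-4) + 2 * real_of_int j + 1 * real_of_int n + (-1) * real_of_int n * real_of_int j) * KOp L (n - 4) j + ((-2) * real_of_int j + 1 * real_of_int n + 1 * real_of_int n * real_of_int j) * KOp L (n - 4) (j + 2)"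
  unfolding KOp_def Phi2_def Phi2a_def by (simp add: algebra_simps)


lemma KOp_Phi1_zero: "KOp Phi1 n j = 0"
proof -
  have t0: "(1 * real_of_int n) * KOp L n j = 0"
    by (cases "n = 0 \<and> j = 0") (auto simp: KOp_L)
  have t1: "(2 + (-2) * real_of_int j + (-2) * real_of_int n) * KOp L (n - 1) j = 0"
    by (cases "n = 1 \<and> j = 0") (auto simp: KOp_L)
  have t2: "(1 + 1 * real_of_int j) * KOp L (n - 1) (j + 1) = 0"
    by (cases "n = 1 \<and> j = -1") (auto simp: KOp_L)
  have t3: "(2 + (-2) * real_of_int j) * KOp L (n - 2) (j - 1) = 0"
    by (cases "n = 2 \<and> j = 1") (auto simp: KOp_L)
  have t4: "((-2) + 2 * real_of_int j + 1 * real_of_int n) * KOp L (n - 2) j = 0"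
    by (cases "n = 2 \<and> j = 0") (auto simp: KOp_L)
  have t5: "((-3) + 3 * real_of_int j) * KOp L (n - 3) (j - 1) = 0"
    by (cases "n = 3 \<and> j = 1") (auto simp: KOp_L)
  have t6: "(12 + 2 * real_of_int j + (-4) * real_of_int n) * KOp L (n - 3) j = 0"
    by (cases "n = 3 \<and> j = 0") (auto simp: KOp_L)
  have t7: "((-1) + (-1) * real_of_int j) * KOp L (n - 3) (j + 1) = 0"
    by (cases "n = 3 \<and> j = -1") (auto simp: KOp_L)
  have t8: "((-16) + 4 * real_of_int n) * KOp L (n - 4) j = 0"
    by (cases "n = 4 \<and> j = 0") (auto simp: KOp_L)
  show ?thesis unfolding KOp_Phi1 by (simp only: t0 t1 t2 t3 t4 t5 t6 t7 t8)
qed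

lemma KOp_Phi2_zero: "KOp Phi2 n j = 0"
proof -
  have t0: "(1 * real_of_int n) * KOp L n j = 0"
    by (cases "n = 0 \<and> j = 0") (auto simp: KOp_L)
  have t1: "(3 + 1 * real_of_int j + (-3) * real_of_int n) * KOp L (n - 1) j = 0"
    by (cases "n = 1 \<and> j = 0") (auto simp: KOp_L)
  have t2: "(1 * real_of_int j + (-1) * real_of_int n * real_of_int j) * KOp L (n - 1) (j + 1) = 0"
    by (cases "n = 1 \<and> j = -1") (auto simp: KOp_L)
  have t3: "(2 + 2 * real_of_int j + (-2) * real_of_int n) * KOp L (n - 2) (j - 1) = 0"
    by (cases "n = 2 \<and> j = 1") (auto simp: KOp_L)
  have t4: "((-4) + 2 * real_of_int n) * KOp L (n - 2) j = 0"
    by (cases "n = 2 \<and> j = 0") (auto simp: KOp_L)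
  have t5: "((-3) + (-3) * real_of_int j + 2 * real_of_int n + 2 * real_of_int n * real_of_int j) * KOp L (n - 2) (j + 1) = 0"
    by (cases "n = 2 \<and> j = -1") (auto simp: KOp_L)
  have t6: "((-1) * real_of_int j + 1 * real_of_int n + 1 * real_of_int n * real_of_int j) * KOp L (n - 2) (j + 2) = 0"
    by (cases "n = 2 \<and> j = -2") (auto simp: KOp_L)
  have t7: "((-6) + 2 * real_of_int n) * KOp L (n - 3) (j - 1) = 0"
    by (cases "n = 3 \<and> j = 1") (auto simp: KOp_L)
  have t8: "(3 + (-2) * real_of_int j + (-1) * real_of_int n + 1 * real_of_int n * real_of_int j) * KOp L (n - 3) j = 0"
    by (cases "n = 3 \<and> j = 0") (auto simp: KOp_L)
  have t9: "(4 + 1 * real_of_int j + (-2) * real_of_int n + (-1) * real_of_int n * real_of_int j) * KOp L (n - 3) (j + 1) = 0"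
    by (cases "n = 3 \<and> j = -1") (auto simp: KOp_L)
  have t10: "(3 * real_of_int j + (-2) * real_of_int n + (-2) * real_of_int n * real_of_int j) * KOp L (n - 3) (j + 2) = 0"
    by (cases "n = 3 \<and> j = -2") (auto simp: KOp_L)
  have t11: "((-4) + 2 * real_of_int j + 1 * real_of_int n + (-1) * real_of_int n * real_of_int j) * KOp L (n - 4) j = 0"
    by (cases "n = 4 \<and> j = 0") (auto simp: KOp_L)
  have t12: "((-2) * real_of_int j + 1 * real_of_int n + 1 * real_of_int n * real_of_int j) * KOp L (n - 4) (j + 2) = 0"
    by (cases "n = 4 \<and> j = -2") (auto simp: KOp_L)
  show ?thesis unfolding KOp_Phi2 by (simp only: t0 t1 t2 t3 t4 t5 t6 t7 t8 t9 t10 t11 t12)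
qed

lemma Phi1_zero: "Phi1 n j = 0"
proof (rule KOp_zero)
  show "Phi1 n j = 0" if "n < 0" for n j using that by (simp add: Phi1_def L_neg)
  show "KOp Phi1 n j = 0" for n j by (rule KOp_Phi1_zero)
qed

lemma Phi2_zero: "Phi2 n j = 0"
proof (rule KOp_zero)
  show "Phi2 n j = 0" if "n < 0" for n j using that by (simp add: Phi2_def Phi2a_def KOp_L L_neg)
  show "KOp Phi2 n j = 0" for n j by (rule KOp_Phi2_zero)
qed

lemma card_shift:
  "card {i. i + 1 < length (b # xs) \<and> Q ((b # xs) ! i) ((b # xs) ! (i + 1))}
   = (if xs \<noteq> [] \<and> Q b (hd xs) then 1 else 0) + card {i. i + 1 < length xs \<and> Q (xs ! i) (xs ! (i + 1))}"
proof -
  let ?B = "{i. i + 1 < length xs \<and> Q (xs ! i) (xs ! (i + 1))}"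
  have eq: "{i. i + 1 < length (b # xs) \<and> Q ((b # xs) ! i) ((b # xs) ! (i + 1))}
     = (if xs \<noteq> [] \<and> Q b (hd xs) then {0} else {}) \<union> Suc ` ?B"
    apply (rule set_eqI)
    subgoal for i by (cases i) (auto simp: hd_conv_nth)
    done
  have fin: "finite ?B" by (rule finite_subset[of _ "{..<length xs}"]) auto
  have "card (Suc ` ?B) = card ?B" by (simp add: card_image)
  moreover have "0 \<notin> Suc ` ?B" by auto
  ultimately show ?thesis unfolding eq using fin by auto
qed

lemma alice_Cons: "alice_score (b # xs) = (if xs \<noteq> [] \<and> b \<and> hd xs then 1 else 0) + alice_score xs"
  unfolding alice_score_def using card_shift[of b xs "\<lambda>u v. u \<and> v"] by simp

lemma bob_Cons: "bob_score (b # xs) = (if xs \<noteq> [] \<and> b \<and> \<not> hd xs then 1 else 0) + bob_score xs"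
  unfolding bob_score_def using card_shift[of b xs "\<lambda>u v. u \<and> \<not> v"] by simp

definition df :: "bool list \<Rightarrow> int" where "df xs = int (bob_score xs) - int (alice_score xs)"

lemma df_Nil: "df [] = 0" by (simp add: df_def alice_score_def bob_score_def)
lemma df_False: "df (False # xs) = df xs" by (simp add: df_def alice_Cons bob_Cons)
lemma df_True: "df (True # xs) = df xs + (if xs = [] then 0 else if hd xs then -1 else 1)"
  by (simp add: df_def alice_Cons bob_Cons)
lemma df_single: "df [b] = 0" by (simp add: df_def alice_Cons bob_Cons alice_score_def bob_score_def)

definition S :: "nat \<Rightarrow> bool list set" where "S n = {xs. length xs = n}"

lemma S_Suc: "S (Suc n) = Cons True ` S n \<union> Cons False ` S n"
  unfolding S_def
  apply (rule set_eqI)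
  subgoal for xs by (cases xs) auto
  done

lemma S_fin: "finite (S n)"
  by (induction n) (auto simp: S_Suc, simp add: S_def)

lemma sum_S_Suc: "(\<Sum>xs\<in>S (Suc n). f xs) = (\<Sum>xs\<in>S n. f (True # xs)) + (\<Sum>xs\<in>S n. f (False # xs))"
proof -
  have "(\<Sum>xs\<in>S (Suc n). f xs) = (\<Sum>xs\<in>Cons True ` S n. f xs) + (\<Sum>xs\<in>Cons False ` S n. f xs)"
    unfolding S_Suc by (rule sum.union_disjoint) (auto simp: S_fin)
  also have "\<dots> = (\<Sum>xs\<in>S n. f (True # xs)) + (\<Sum>xs\<in>S n. f (False # xs))"
    by (simp add: sum.reindex)
  finally show ?thesis .
qed

lemma S_nonempty: "xs \<in> S (Suc n) \<Longrightarrow> xs \<noteq> []" by (auto simp: S_def)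

definition DD :: "nat \<Rightarrow> real" where "DD n = (\<Sum>xs\<in>S n. of_int (sgn (df xs)))"
definition cH :: "nat \<Rightarrow> int \<Rightarrow> real" where
  "cH n j = (\<Sum>xs\<in>S n. if xs \<noteq> [] \<and> hd xs \<and> df xs = j then 1 else 0)"
definition cT :: "nat \<Rightarrow> int \<Rightarrow> real" where
  "cT n j = (\<Sum>xs\<in>S n. if xs \<noteq> [] \<and> \<not> hd xs \<and> df xs = j then 1 else 0)"

lemma S0: "S 0 = {[]}" by (auto simp: S_def)
lemma S1: "S (Suc 0) = {[True], [False]}" by (auto simp: S_def length_Suc_conv)

lemma DD0: "DD 0 = 0" by (simp add: DD_def S0 df_Nil)
lemma DD1: "DD 1 = 0" by (simp add: DD_def S1 df_single)
lemma cH1: "cH (Suc 0) j = (if j = 0 then 1 else 0)" by (simp add: cH_def S1 df_single)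
lemma cT1: "cT (Suc 0) j = (if j = 0 then 1 else 0)" by (simp add: cT_def S1 df_single)

lemma cH_Suc: "n \<ge> 1 \<Longrightarrow> cH (Suc n) j = cH n (j + 1) + cT n (j - 1)"
proof -
  assume n: "n \<ge> 1"
  then obtain m where m: "n = Suc m" by (cases n) auto
  have "cH (Suc n) j = (\<Sum>xs\<in>S n. if df (True # xs) = j then 1 else 0)"
    unfolding cH_def sum_S_Suc by simp
  also have "\<dots> = (\<Sum>xs\<in>S n. (if xs \<noteq> [] \<and> hd xs \<and> df xs = j + 1 then 1 else 0)
      + (if xs \<noteq> [] \<and> \<not> hd xs \<and> df xs = j - 1 then 1 else 0))"
    by (rule sum.cong) (auto simp: m df_True S_def)
  also have "\<dots> = cH n (j + 1) + cT n (j - 1)"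
    unfolding cH_def cT_def by (simp add: sum.distrib)
  finally show ?thesis .
qed

lemma cT_Suc: "n \<ge> 1 \<Longrightarrow> cT (Suc n) j = cH n j + cT n j"
proof -
  assume n: "n \<ge> 1"
  then obtain m where m: "n = Suc m" by (cases n) auto
  have "cT (Suc n) j = (\<Sum>xs\<in>S n. if df xs = j then 1 else 0)"
    unfolding cT_def sum_S_Suc by (simp add: df_False)
  also have "\<dots> = (\<Sum>xs\<in>S n. (if xs \<noteq> [] \<and> hd xs \<and> df xs = j then 1 else 0)
      + (if xs \<noteq> [] \<and> \<not> hd xs \<and> df xs = j then 1 else 0))"
    by (rule sum.cong) (auto simp: m S_def)
  also have "\<dots> = cH n j + cT n j"
    unfolding cH_def cT_def by (simp add: sum.distrib)
  finally show ?thesis .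
qed

lemma sgn_step: "of_int (sgn (k + (if h then -1 else 1))) = (of_int (sgn k) :: real)
   + (if \<not> h \<and> k = 0 then 1 else 0) + (if \<not> h \<and> k = -1 then 1 else 0)
   - (if h \<and> k = 0 then 1 else 0) - (if h \<and> k = 1 then 1 else 0)"
  by (cases "k < -1"; cases "k > 1"; cases h) (auto simp: sgn_if)

lemma DD_Suc: "n \<ge> 1 \<Longrightarrow> DD (Suc n) = 2 * DD n + cT n 0 + cT n (-1) - cH n 0 - cH n 1"
proof -
  assume n: "n \<ge> 1"
  then obtain m where m: "n = Suc m" by (cases n) auto
  have "DD (Suc n) = (\<Sum>xs\<in>S n. of_int (sgn (df xs + (if hd xs then -1 else 1)))) + DD n"
    unfolding DD_def sum_S_Suc
    by (rule arg_cong2[where f="(+)"], rule sum.cong) (auto simp: m df_True df_False S_def)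
  also have "(\<Sum>xs\<in>S n. of_int (sgn (df xs + (if hd xs then -1 else 1))) :: real)
     = (\<Sum>xs\<in>S n. of_int (sgn (df xs))
       + (if xs \<noteq> [] \<and> \<not> hd xs \<and> df xs = 0 then 1 else 0) + (if xs \<noteq> [] \<and> \<not> hd xs \<and> df xs = -1 then 1 else 0)
       - (if xs \<noteq> [] \<and> hd xs \<and> df xs = 0 then 1 else 0) - (if xs \<noteq> [] \<and> hd xs \<and> df xs = 1 then 1 else 0))"
    by (rule sum.cong) (auto simp: m sgn_step S_def)
  also have "\<dots> = DD n + cT n 0 + cT n (-1) - cH n 0 - cH n 1"
    unfolding DD_def cH_def cT_def by (simp add: sum.distrib sum_subtractf)
  finally show ?thesis by simp
qed

lemma card_filter: "finite A \<Longrightarrow> real (card {x\<in>A. P x}) = (\<Sum>x\<in>A. if P x then 1 else 0)"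
  by (simp add: sum.If_cases Int_def)

lemma Delta_DD: "Delta n = DD n / 2 ^ n"
proof -
  have e1: "{xs. length xs = n \<and> bob_score xs > alice_score xs} = {xs\<in>S n. df xs > 0}"
    by (auto simp: S_def df_def)
  have e2: "{xs. length xs = n \<and> alice_score xs > bob_score xs} = {xs\<in>S n. df xs < 0}"
    by (auto simp: S_def df_def)
  have "DD n = (\<Sum>xs\<in>S n. (if df xs > 0 then 1 else 0) - (if df xs < 0 then 1 else 0))"
    unfolding DD_def by (rule sum.cong) (auto simp: sgn_if)
  also have "\<dots> = real (card {xs\<in>S n. df xs > 0}) - real (card {xs\<in>S n. df xs < 0})"
    by (simp add: card_filter S_fin sum_subtractf)
  finally show ?thesis unfolding Delta_def e1 e2 by simp
qed

lemma Lstep: "m \<noteq> 0 \<Longrightarrow> L m i = L (m - 1) i + L (m - 1) (i + 1) + L (m - 2) (i - 1) - L (m - 2) (i + 1)"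
  using KOp_L[of m i] by (simp add: KOp_def)

lemma cHL: "n \<ge> 1 \<Longrightarrow> (\<forall>j. cH n j = L (int n - 1) j + L (int n - 2) (j - 1) - L (int n - 2) j
   \<and> cT n j = L (int n - 1) j + L (int n - 2) j - L (int n - 2) (j + 1))"
proof (induction n rule: dec_induct)
  case base
  show ?case by (simp add: cH1 cT1 L_def)
next
  case (step n)
  show ?case
  proof
    fix j
    have a: "cH n (j + 1) = L (int n - 1) (j + 1) + L (int n - 2) j - L (int n - 2) (j + 1)"
      using step.IH[rule_format, of "j + 1"] by simp
    have b: "cT n (j - 1) = L (int n - 1) (j - 1) + L (int n - 2) (j - 1) - L (int n - 2) j"
      using step.IH[rule_format, of "j - 1"] by simp
    have c: "cH n j = L (int n - 1) j + L (int n - 2) (j - 1) - L (int n - 2) j"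
         "cT n j = L (int n - 1) j + L (int n - 2) j - L (int n - 2) (j + 1)"
      using step.IH by auto
    have s1: "L (int n) j = L (int n - 1) j + L (int n - 1) (j + 1) + L (int n - 2) (j - 1) - L (int n - 2) (j + 1)"
      using Lstep[of "int n" j] step.hyps by simp
    have s2: "L (int n) (j - 1) = L (int n - 1) (j - 1) + L (int n - 1) j + L (int n - 2) (j - 2) - L (int n - 2) j"
      using Lstep[of "int n" "j - 1"] step.hyps by simp
    have e: "int (Suc n) - 1 = int n" "int (Suc n) - 2 = int n - 1" by auto
    show "cH (Suc n) j = L (int (Suc n) - 1) j + L (int (Suc n) - 2) (j - 1) - L (int (Suc n) - 2) j
       \<and> cT (Suc n) j = L (int (Suc n) - 1) j + L (int (Suc n) - 2) j - L (int (Suc n) - 2) (j + 1)"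
      unfolding e cH_Suc[OF step.hyps(1)] cT_Suc[OF step.hyps(1)] a b c s1 by simp
  qed
qed

lemma DD_L_step: "n \<ge> 1 \<Longrightarrow> DD (Suc n) = 2 * DD n + L (int n - 1) (-1) - L (int n - 1) 1"
proof -
  assume n: "n \<ge> 1"
  have h: "\<And>j. cH n j = L (int n - 1) j + L (int n - 2) (j - 1) - L (int n - 2) j"
     "\<And>j. cT n j = L (int n - 1) j + L (int n - 2) j - L (int n - 2) (j + 1)"
    using cHL[OF n] by auto
  show ?thesis unfolding DD_Suc[OF n] h by simp
qed

lemma ell_rel: "n \<ge> 2 \<Longrightarrow> L n 0 - 3 * L (n - 1) 0 + 2 * L (n - 2) 0
   = 2 * (L (n - 2) (-1) - L (n - 2) 1) - 2 * (L (n - 3) (-1) - L (n - 3) 1)"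
proof -
  assume n: "n \<ge> 2"
  have "Phi2 n 0 = 0" by (rule Phi2_zero)
  then have "real_of_int n * (L n 0 - 3 * L (n - 1) 0 + 2 * L (n - 2) 0
      - 2 * (L (n - 2) (-1) - L (n - 2) 1) + 2 * (L (n - 3) (-1) - L (n - 3) 1)) = 0"
    using n by (simp add: Phi2_def Phi2a_def KOp_L algebra_simps)
  then show ?thesis using n by simp
qed

lemma L012: "L 0 0 = 1" "L 1 0 = 1" "L 2 0 = 1" "L 0 (-1) = 0" "L 0 1 = 0"
  by (simp_all add: L_def numeral_2_eq_2)

lemma DD_L: "2 * DD n + 1 = L (int n) 0"
proof (induction n rule: less_induct)
  case (less n)
  show ?case
  proof (cases "n \<le> 2")
    case True
    have D2: "DD 2 = 0" using DD_L_step[of 1] DD1 L012 by (simp add: numeral_2_eq_2)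
    from True have "n = 0 \<or> n = 1 \<or> n = 2" by auto
    then show ?thesis using DD0 DD1 D2 L012 by auto
  next
    case False
    then obtain k where k: "n = Suc (Suc (Suc k))" by (metis Suc_le_D not_less_eq_eq numeral_2_eq_2)
    have i1: "2 * DD (Suc (Suc k)) + 1 = L (int k + 2) 0" using less[of "Suc (Suc k)"] k by (simp add: ac_simps)
    have i2: "2 * DD (Suc k) + 1 = L (int k + 1) 0" using less[of "Suc k"] k by (simp add: ac_simps)
    have d1: "DD n = 2 * DD (Suc (Suc k)) + L (int k + 1) (-1) - L (int k + 1) 1"
      using DD_L_step[of "Suc (Suc k)"] k by (simp add: algebra_simps)
    have d2: "DD (Suc (Suc k)) = 2 * DD (Suc k) + L (int k) (-1) - L (int k) 1"
      using DD_L_step[of "Suc k"] by (simp add: algebra_simps)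
    have r: "L (int k + 3) 0 - 3 * L (int k + 2) 0 + 2 * L (int k + 1) 0
      = 2 * (L (int k + 1) (-1) - L (int k + 1) 1) - 2 * (L (int k) (-1) - L (int k) 1)"
      using ell_rel[of "int k + 3"] by (simp add: algebra_simps)
    have "int n = int k + 3" using k by simp
    then show ?thesis using i1 i2 d1 d2 r by (simp add: algebra_simps)
  qed
qed

lemma d_L: "d m = L m 0 / 2"
proof (cases "m < 0")
  case True then show ?thesis by (simp add: d_def L_def)
next
  case False
  then obtain k where k: "m = int k" by (metis nonneg_int_cases not_less)
  have "d m = DD k + 1 / 2" using k by (simp add: d_def Delta_DD)
  then show ?thesis using DD_L[of k] k by simp
qed

lemma ell_rec: "real_of_int n * L n 0 + (1 - 2 * real_of_int n) * L (n - 1) 0 + (real_of_int n - 1) * L (n - 2) 0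
   + (6 - 4 * real_of_int n) * L (n - 3) 0 + (4 * real_of_int n - 8) * L (n - 4) 0 = 0"
  using Phi1_zero[of n 0] by (simp add: Phi1_def algebra_simps)

theorem mainTheorem15:
  shows "(\<forall>n::nat. n \<ge> 1 \<longrightarrow>
            d (int n) - (2 - 1 / real n) * d (int n - 1) + (1 - 1 / real n) * d (int n - 2)
            - (4 - 6 / real n) * d (int n - 3) + (4 - 8 / real n) * d (int n - 4) = 0)
       \<and> (\<forall>n::nat. n \<ge> 4 \<longrightarrow>
            Delta n = 1 / (real n * 2 ^ n)
              + (1 / (2 * real n) - 1 / 4) * Delta (n - 4)
              + (1 / 2 - 3 / (4 * real n)) * Delta (n - 3)
              + (1 / (4 * real n) - 1 / 4) * Delta (n - 2)
              + (1 - 1 / (2 * real n)) * Delta (n - 1))"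
proof -
  have first: "d (int n) - (2 - 1 / real n) * d (int n - 1) + (1 - 1 / real n) * d (int n - 2)
            - (4 - 6 / real n) * d (int n - 3) + (4 - 8 / real n) * d (int n - 4) = 0"
    if n: "n \<ge> 1" for n :: nat
  proof -
    have np: "real n > 0" using n by simp
    have e: "real n * L (int n) 0 + (1 - 2 * real n) * L (int n - 1) 0 + (real n - 1) * L (int n - 2) 0
      + (6 - 4 * real n) * L (int n - 3) 0 + (4 * real n - 8) * L (int n - 4) 0 = 0"
      using ell_rec[of "int n"] by simp
    have "2 * real n * (d (int n) - (2 - 1 / real n) * d (int n - 1) + (1 - 1 / real n) * d (int n - 2)
            - (4 - 6 / real n) * d (int n - 3) + (4 - 8 / real n) * d (int n - 4))
        = real n * L (int n) 0 + (1 - 2 * real n) * L (int n - 1) 0 + (real n - 1) * L (int n - 2) 0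
      + (6 - 4 * real n) * L (int n - 3) 0 + (4 * real n - 8) * L (int n - 4) 0"
      unfolding d_L using np by (simp add: field_simps)
    then show ?thesis using e np by simp
  qed
  have second: "Delta n = 1 / (real n * 2 ^ n)
              + (1 / (2 * real n) - 1 / 4) * Delta (n - 4)
              + (1 / 2 - 3 / (4 * real n)) * Delta (n - 3)
              + (1 / (4 * real n) - 1 / 4) * Delta (n - 2)
              + (1 - 1 / (2 * real n)) * Delta (n - 1)" if n: "n \<ge> 4" for n :: nat
  proof -
    obtain m where m: "n = m + 4" using n by (metis add.commute le_Suc_ex)
    have np: "real n > 0" using n by simp
    have f: "d (int n) - (2 - 1 / real n) * d (int n - 1) + (1 - 1 / real n) * d (int n - 2)
            - (4 - 6 / real n) * d (int n - 3) + (4 - 8 / real n) * d (int n - 4) = 0"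
      using first n by simp
    have dd: "d (int k) = 2 ^ k * Delta k + 1 / 2" for k by (simp add: d_def)
    have idx: "int n - 1 = int (m + 3)" "int n - 2 = int (m + 2)" "int n - 3 = int (m + 1)" "int n - 4 = int m"
       "n - 1 = m + 3" "n - 2 = m + 2" "n - 3 = m + 1" "n - 4 = m" using m by auto
    have p: "(2::real) ^ n = 16 * 2 ^ m" "(2::real) ^ (m + 3) = 8 * 2 ^ m"
       "(2::real) ^ (m + 2) = 4 * 2 ^ m" "(2::real) ^ (m + 1) = 2 * 2 ^ m"
      using m by (simp_all add: power_add)
    have pm: "(2::real) ^ m > 0" by simp
    from f have f': "(2 ^ n * Delta n + 1 / 2) - (2 - 1 / real n) * (2 ^ (m + 3) * Delta (m + 3) + 1 / 2)
       + (1 - 1 / real n) * (2 ^ (m + 2) * Delta (m + 2) + 1 / 2)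
       - (4 - 6 / real n) * (2 ^ (m + 1) * Delta (m + 1) + 1 / 2) + (4 - 8 / real n) * (2 ^ m * Delta m + 1 / 2) = 0"
      unfolding idx(1-4) dd .
    show ?thesis unfolding idx(5-8) using f' np pm unfolding p by (simp add: field_simps)
  qed
  show ?thesis using first second by blast
qed

end
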